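(* Let $X$ be a crowded T$_D$ space. Then: (1) every open neighbourhood $O$ of a point $x\in X$ includes an open neighbourhood $O'$ of $x$ such that $O'-\{x\}$ is non-empty and open; (2) for every open $O\subseteq X$ and every $S\subseteq X$, if $O\subseteq\mathrm{cl}_XS$ then $O\subseteq\mathrm{d}_XS$; (3) $\mathrm{int}_X\mathrm{cl}_XS=\mathrm{int}_X\mathrm{d}_XS$ for every $S\subseteq X$; (4) for every topological model $\mathcal{M}$ on $X$ and every formula $\varphi$, $\mathcal{M}_d(\Diamond^*(\Box^*\varphi\lor\Box^*\neg\varphi))=\mathcal{M}_d(\Diamond(\Box\varphi\lor\Box\neg\varphi))$.
   Context: For $S\subseteq X$, $\mathrm{cl}_X S$, $\mathrm{int}_XS$ are closure and interior, and $\mathrm{d}_XS$ is the set of limit points of $S$ ($x$ such that every $O-\{x\}$, $O$ an open neighbourhood of $x$, meets $S$). $X$ is crowded if it has no isolated points, and T$_D$ if $\mathrm{d}_X\{x\}$ is closed for every $x$. $\Diamond^*\psi$ abbreviates $\psi\lor\Diamond\psi$ and $\Box^*\psi$ abbreviates $\psi\land\Box\psi$. A topological model $\mathcal{M}$ on $X$ is a valuation of propositional variables by subsets of $X$; $\mathcal{M}_d(\varphi)$ is defined inductively with Boolean connectives as set operations, $\mathcal{M}_d(\Diamond\varphi)=\mathrm{d}_X(\mathcal{M}_d(\varphi))$ and $\mathcal{M}_d(\Box\varphi)=\mathcal{M}_d(\neg\Diamond\neg\varphi)$. *)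

theory Defs
  imports "HOL-Analysis.Analysis"
begin

definition crowded :: "'a topology \<Rightarrow> bool" where
  "crowded X \<longleftrightarrow> (\<forall>x\<in>topspace X. \<not> openin X {x})"

definition TD_space :: "'a topology \<Rightarrow> bool" where
  "TD_space X \<longleftrightarrow> (\<forall>x\<in>topspace X. closedin X (X derived_set_of {x}))"

datatype 'v fm =
    Var 'v
  | Bot
  | Neg "'v fm"
  | Conj "'v fm" "'v fm"
  | Disj "'v fm" "'v fm"
  | Imp "'v fm" "'v fm"
  | Dia "'v fm"
  | Box "'v fm"

fun dsem :: "'a topology \<Rightarrow> ('v \<Rightarrow> 'a set) \<Rightarrow> 'v fm \<Rightarrow> 'a set" where
  "dsem X V (Var p) = V p"
| "dsem X V Bot = {}"
| "dsem X V (Neg \<phi>) = topspace X - dsem X V \<phi>"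
| "dsem X V (Conj \<phi> \<psi>) = dsem X V \<phi> \<inter> dsem X V \<psi>"
| "dsem X V (Disj \<phi> \<psi>) = dsem X V \<phi> \<union> dsem X V \<psi>"
| "dsem X V (Imp \<phi> \<psi>) = (topspace X - dsem X V \<phi>) \<union> dsem X V \<psi>"
| "dsem X V (Dia \<phi>) = X derived_set_of (dsem X V \<phi>)"
| "dsem X V (Box \<phi>) = topspace X - X derived_set_of (topspace X - dsem X V \<phi>)"

definition DiaS :: "'v fm \<Rightarrow> 'v fm" where "DiaS \<phi> = Disj \<phi> (Dia \<phi>)"
definition BoxS :: "'v fm \<Rightarrow> 'v fm" where "BoxS \<phi> = Conj \<phi> (Box \<phi>)"

end

theory Submission
  imports Defs
begin

lemma P1:
  assumes cr: "crowded X" and td: "TD_space X" and U: "openin X U" and x: "x \<in> U"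
  shows "\<exists>U'. openin X U' \<and> x \<in> U' \<and> U' \<subseteq> U \<and> U' - {x} \<noteq> {} \<and> openin X (U' - {x})"
proof -
  have xt: "x \<in> topspace X" using U x openin_subset by blast
  define U' where "U' = U - X derived_set_of {x}"
  have o1: "openin X U'" unfolding U'_def using td xt U by (auto simp: TD_space_def)
  have xU': "x \<in> U'" unfolding U'_def using x by (auto simp: in_derived_set_of)
  have eq: "U' - {x} = U - X closure_of {x}"
    unfolding U'_def closure_of_alt using xt by auto
  have o2: "openin X (U' - {x})" unfolding eq using U by auto
  have "U' \<noteq> {x}" using cr xt o1 by (auto simp: crowded_def)
  hence "U' - {x} \<noteq> {}" using xU' by auto
  thus ?thesis using o1 o2 xU' U'_def by auto
qed

lemma P2:
  assumes cr: "crowded X" and td: "TD_space X" and U: "openin X U" and sub: "U \<subseteq> X closure_of S"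
  shows "U \<subseteq> X derived_set_of S"
proof
  fix x assume x: "x \<in> U"
  have xt: "x \<in> topspace X" using openin_subset[OF U] x by blast
  show "x \<in> X derived_set_of S"
    unfolding in_derived_set_of
  proof (intro conjI allI impI)
    show "x \<in> topspace X" by (rule xt)
    fix T assume T: "x \<in> T \<and> openin X T"
    have "openin X (U \<inter> T)" "x \<in> U \<inter> T" using T U x by auto
    from P1[OF cr td this] obtain U' where U': "openin X U'" "x \<in> U'" "U' \<subseteq> U \<inter> T" "U' - {x} \<noteq> {}" "openin X (U' - {x})"
      by blast
    then obtain w where w: "w \<in> U' - {x}" by auto
    hence "w \<in> X closure_of S" using U' sub by auto
    hence "\<forall>T. w \<in> T \<and> openin X T \<longrightarrow> (\<exists>y. y \<in> S \<and> y \<in> T)" unfolding in_closure_of by simp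
    hence "\<exists>y. y \<in> S \<and> y \<in> U' - {x}" using w U'(5) by (elim allE[of _ "U' - {x}"]) simp
    then obtain y where "y \<in> S" "y \<in> U' - {x}" by blast
    thus "\<exists>y. y \<noteq> x \<and> y \<in> S \<and> y \<in> T" using U' by blast
  qed
qed

lemma dsem_sub: "(\<forall>p. V p \<subseteq> topspace X) \<Longrightarrow> dsem X V \<phi> \<subseteq> topspace X"
  by (induction \<phi>) (auto simp: derived_set_of_subset_topspace)

lemma K:
  assumes cr: "crowded X" and td: "TD_space X" and A: "A \<subseteq> topspace X"
    and y: "y \<in> topspace X - X derived_set_of (topspace X - A)"
    and W: "openin X W" "y \<in> W"
  shows "\<exists>z\<in>W. z \<noteq> x \<and> z \<in> A \<inter> (topspace X - X derived_set_of (topspace X - A))"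
proof -
  have yt: "y \<in> topspace X" using y by simp
  have "y \<notin> X derived_set_of (topspace X - A)" using y by simp
  hence "\<exists>T. y \<in> T \<and> openin X T \<and> \<not> (\<exists>u. u \<noteq> y \<and> u \<in> topspace X - A \<and> u \<in> T)"
    unfolding in_derived_set_of using yt by simp
  then obtain T where T: "openin X T" "y \<in> T" and T3: "\<And>u. u \<noteq> y \<Longrightarrow> u \<in> topspace X - A \<Longrightarrow> u \<notin> T"
    by metis
  have "openin X (W \<inter> T)" "y \<in> W \<inter> T" using T W by auto
  from P1[OF cr td this] obtain U' where U': "openin X U'" "y \<in> U'" "U' \<subseteq> W \<inter> T" "U' - {y} \<noteq> {}" "openin X (U' - {y})"
    by blast
  have Tt: "T \<subseteq> topspace X" using openin_subset[OF T(1)] .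
  have VA: "U' - {y} \<subseteq> A"
  proof
    fix u assume u: "u \<in> U' - {y}"
    hence "u \<in> T" "u \<noteq> y" using U'(3) by auto
    thus "u \<in> A" using T3[of u] Tt by auto
  qed
  have "U' - {y} \<noteq> {x}"
  proof
    assume e: "U' - {y} = {x}"
    hence "openin X {x}" using U'(5) by simp
    moreover have "x \<in> topspace X" using e openin_subset[OF U'(5)] by auto
    ultimately show False using cr by (auto simp: crowded_def)
  qed
  then obtain z where z: "z \<in> U' - {y}" "z \<noteq> x" using U'(4) by blast
  have zt: "z \<in> topspace X" using z openin_subset[OF U'(1)] by auto
  have "z \<notin> X derived_set_of (topspace X - A)"
  proof
    assume "z \<in> X derived_set_of (topspace X - A)"
    hence "\<exists>u. u \<noteq> z \<and> u \<in> topspace X - A \<and> u \<in> U' - {y}"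
      unfolding in_derived_set_of using z(1) U'(5) by (elim conjE allE[of _ "U' - {y}"]) simp
    thus False using VA by auto
  qed
  moreover have "z \<in> W" using z U'(3) by auto
  moreover have "z \<in> A" using z VA by auto
  ultimately show ?thesis using z zt by blast
qed

lemma P4:
  assumes cr: "crowded X" and td: "TD_space X" and A: "A \<subseteq> topspace X"
  defines "B \<equiv> topspace X - X derived_set_of (topspace X - A)"
    and "C \<equiv> topspace X - X derived_set_of (topspace X - (topspace X - A))"
  defines "E \<equiv> (A \<inter> B) \<union> ((topspace X - A) \<inter> C)"
  shows "E \<union> X derived_set_of E = X derived_set_of (B \<union> C)"
proof -
  have A': "topspace X - A \<subseteq> topspace X" by auto
  have key: "\<exists>z\<in>W. z \<noteq> x \<and> z \<in> E" if "y \<in> B \<union> C" "openin X W" "y \<in> W" for y W x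
  proof (cases "y \<in> B")
    case True
    then show ?thesis using K[OF cr td A, of y W x] that unfolding B_def E_def by blast
  next
    case False
    hence "y \<in> C" using that by blast
    moreover have "topspace X - (topspace X - (topspace X - A)) = topspace X - A" by blast
    ultimately show ?thesis using K[OF cr td A', of y W x] that unfolding C_def E_def B_def by auto
  qed
  have s1: "B \<union> C \<subseteq> X derived_set_of E"
  proof
    fix y assume y: "y \<in> B \<union> C"
    hence "y \<in> topspace X" unfolding B_def C_def by blast
    thus "y \<in> X derived_set_of E" unfolding in_derived_set_of using key[OF y] by blast
  qed
  have s2: "X derived_set_of (B \<union> C) \<subseteq> X derived_set_of E"
  proof
    fix x assume x: "x \<in> X derived_set_of (B \<union> C)"
    show "x \<in> X derived_set_of E" unfolding in_derived_set_of
    proof (intro conjI allI impI)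
      show "x \<in> topspace X" using x by (simp add: in_derived_set_of)
      fix W assume W: "x \<in> W \<and> openin X W"
      then obtain y where "y \<in> B \<union> C" "y \<in> W" using x unfolding in_derived_set_of by blast
      thus "\<exists>z. z \<noteq> x \<and> z \<in> E \<and> z \<in> W" using key W by blast
    qed
  qed
  have "E \<subseteq> B \<union> C" unfolding E_def by blast
  hence s3: "X derived_set_of E \<subseteq> X derived_set_of (B \<union> C)" by (rule derived_set_of_mono)
  have "E \<subseteq> X derived_set_of E" using s1 \<open>E \<subseteq> B \<union> C\<close> by blast
  thus ?thesis using s2 s3 by blast
qed

theorem lemma8:
  fixes X :: "'a topology"
  assumes "crowded X" and "TD_space X"
  shows "(\<forall>U x. openin X U \<and> x \<in> U \<longrightarrow>
            (\<exists>U'. openin X U' \<and> x \<in> U' \<and> U' \<subseteq> U \<and> U' - {x} \<noteq> {} \<and> openin X (U' - {x})))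
       \<and> (\<forall>U S. openin X U \<and> S \<subseteq> topspace X \<and> U \<subseteq> X closure_of S \<longrightarrow> U \<subseteq> X derived_set_of S)
       \<and> (\<forall>S. S \<subseteq> topspace X \<longrightarrow>
            X interior_of (X closure_of S) = X interior_of (X derived_set_of S))
       \<and> (\<forall>(V :: 'v \<Rightarrow> 'a set) \<phi>. (\<forall>p. V p \<subseteq> topspace X) \<longrightarrow>
            dsem X V (DiaS (Disj (BoxS \<phi>) (BoxS (Neg \<phi>))))
              = dsem X V (Dia (Disj (Box \<phi>) (Box (Neg \<phi>)))))"
proof (intro conjI allI impI)
  fix U x assume "openin X U \<and> x \<in> U"
  thus "\<exists>U'. openin X U' \<and> x \<in> U' \<and> U' \<subseteq> U \<and> U' - {x} \<noteq> {} \<and> openin X (U' - {x})"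
    using P1[OF assms] by blast
next
  fix U S assume "openin X U \<and> S \<subseteq> topspace X \<and> U \<subseteq> X closure_of S"
  thus "U \<subseteq> X derived_set_of S" using P2[OF assms] by blast
next
  fix S :: "'a set" assume "S \<subseteq> topspace X"
  show "X interior_of (X closure_of S) = X interior_of (X derived_set_of S)"
  proof
    show "X interior_of (X closure_of S) \<subseteq> X interior_of (X derived_set_of S)"
      apply (rule interior_of_maximal)
       apply (rule P2[OF assms]) 
        apply simp
       apply (rule interior_of_subset)
      apply simp
      done
    show "X interior_of (X derived_set_of S) \<subseteq> X interior_of (X closure_of S)"
      by (rule interior_of_mono[OF derived_set_of_subset_closure_of])
  qed
next
  fix V :: "'v \<Rightarrow> 'a set" and \<phi> assume V: "\<forall>p. V p \<subseteq> topspace X"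
  have A: "dsem X V \<phi> \<subseteq> topspace X" using dsem_sub[OF V] .
  show "dsem X V (DiaS (Disj (BoxS \<phi>) (BoxS (Neg \<phi>))))
              = dsem X V (Dia (Disj (Box \<phi>) (Box (Neg \<phi>))))"
    using P4[OF assms A] by (simp add: DiaS_def BoxS_def)
qed

end
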